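(* Let $G$ be a SIN topological group, $\xi=(E\xrightarrow{p}X)$ a numerable principal $G$-bundle, $C$ an $X$-groupoid, $\mathcal G$ the gauge group of $\xi$ and $\mathcal R(C,\xi)$ the set of representations of $C$ on $\xi$. Then the right action $\mathcal R(C,\xi)\times\mathcal G\to\mathcal R(C,\xi)$, $(w,\chi)\mapsto w^\chi$, is uniformly continuous for the uniform structures $\mathbf U_{\mathcal R}$ on $\mathcal R(C,\xi)$ and $\mathbf U_{\mathcal G}$ on $\mathcal G$.
   Context: SIN: the identity has a fundamental system of conjugation-invariant neighbourhoods. $X$-groupoid: a space $C$ with continuous source/target $\alpha,\beta:C\to X$, continuous associative partial composition on $\{(c_1,c_2):\alpha(c_1)=\beta(c_2)\}$ with $\alpha(c_1c_2)=\alpha(c_2)$, $\beta(c_1c_2)=\beta(c_1)$, continuous units and continuous inversion exchanging source and target. A representation of $C$ on $\xi$ is a continuous $w:C\times_XE\to E$ (fiber product over $\alpha$, $p$) with $p(w(c,z))=\beta(c)$, $w(cd,z)=w(c,w(d,z))$, $w(c^{-1},w(c,z))=z$, $w(c,zg)=w(c,z)g$. Gauge group $\mathcal G$: $G$-equivariant homeomorphisms $\chi$ of $E$ with $p\chi=p$; action $w^\chi(c,z)=\chi^{-1}(w(c,\chi(z)))$. Let $\gamma:E\times_XE\to G$ be defined by $y=z\gamma(y,z)$ and $\mathcal V_G$ the set of open symmetric neighbourhoods of $e$ in $G$. $\mathbf U_{\mathcal G}$ has fundamental entourages $\{(\chi,\tilde\chi):\gamma(\chi(z),\tilde\chi(z))\in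 V\ \forall z\in p^{-1}(K)\}$ ($K\subset X$ compact, $V\in\mathcal V_G$). $\mathbf U_{\mathcal R}$ has fundamental entourages $\mathcal O^{\mathcal R}(L,V)=\{(w,\tilde w):\gamma(w(c,z),\tilde w(c,z))\in V\ \forall(c,z)\in L\times_XE\}$ ($L\subset C$ compact, $V\in\mathcal V_G$). The product carries the product uniform structure. *)

theory Defs
  imports "HOL-Analysis.Analysis" "HOL-Algebra.Group"
begin

definition topological_group :: "'g monoid \<Rightarrow> 'g topology \<Rightarrow> bool" where
  "topological_group G TG \<longleftrightarrow> group G \<and> topspace TG = carrier G \<and>
     continuous_map (prod_topology TG TG) TG (\<lambda>(x, y). x \<otimes>\<^bsub>G\<^esub> y) \<and>
     continuous_map TG TG (\<lambda>x. inv\<^bsub>G\<^esub> x)"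

definition SIN_group :: "'g monoid \<Rightarrow> 'g topology \<Rightarrow> bool" where
  "SIN_group G TG \<longleftrightarrow> topological_group G TG \<and>
     (\<forall>U. openin TG U \<and> \<one>\<^bsub>G\<^esub> \<in> U \<longrightarrow>
        (\<exists>N. N \<subseteq> U \<and> \<one>\<^bsub>G\<^esub> \<in> TG interior_of N \<and>
             (\<forall>g\<in>carrier G. \<forall>n\<in>N. g \<otimes>\<^bsub>G\<^esub> n \<otimes>\<^bsub>G\<^esub> inv\<^bsub>G\<^esub> g \<in> N)))"

definition sym_nhds :: "'g monoid \<Rightarrow> 'g topology \<Rightarrow> 'g set set" where
  "sym_nhds G TG = {V. openin TG V \<and> \<one>\<^bsub>G\<^esub> \<in> V \<and> (\<forall>g\<in>V. inv\<^bsub>G\<^esub> g \<in> V)}"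

text \<open>\<open>act z g\<close> is the right action \<open>z g\<close> of \<open>G\<close> on \<open>E\<close>.\<close>
definition trivializing_open ::
  "'g monoid \<Rightarrow> 'g topology \<Rightarrow> 'x topology \<Rightarrow> 'e topology \<Rightarrow> ('e \<Rightarrow> 'x)
     \<Rightarrow> ('e \<Rightarrow> 'g \<Rightarrow> 'e) \<Rightarrow> 'x set \<Rightarrow> bool" where
  "trivializing_open G TG TX TE p act U \<longleftrightarrow> openin TX U \<and>
     (\<exists>\<phi>. homeomorphic_map (subtopology TE {z \<in> topspace TE. p z \<in> U})
                            (prod_topology (subtopology TX U) TG) \<phi> \<and>
          (\<forall>z \<in> topspace TE. p z \<in> U \<longrightarrow>
             fst (\<phi> z) = p z \<and>
             (\<forall>g\<in>carrier G. \<phi> (act z g) = (fst (\<phi> z), snd (\<phi> z) \<otimes>\<^bsub>G\<^esub> g))))"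

definition principal_bundle ::
  "'g monoid \<Rightarrow> 'g topology \<Rightarrow> 'x topology \<Rightarrow> 'e topology \<Rightarrow> ('e \<Rightarrow> 'x)
     \<Rightarrow> ('e \<Rightarrow> 'g \<Rightarrow> 'e) \<Rightarrow> bool" where
  "principal_bundle G TG TX TE p act \<longleftrightarrow> topological_group G TG \<and>
     continuous_map TE TX p \<and>
     continuous_map (prod_topology TE TG) TE (\<lambda>(z, g). act z g) \<and>
     (\<forall>z\<in>topspace TE. act z \<one>\<^bsub>G\<^esub> = z) \<and>
     (\<forall>z\<in>topspace TE. \<forall>g\<in>carrier G. \<forall>h\<in>carrier G.
         act (act z g) h = act z (g \<otimes>\<^bsub>G\<^esub> h)) \<and>
     (\<forall>z\<in>topspace TE. \<forall>g\<in>carrier G. p (act z g) = p z) \<and>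
     (\<forall>x\<in>topspace TX. \<exists>U. x \<in> U \<and> trivializing_open G TG TX TE p act U)"

definition numerable_bundle ::
  "'g monoid \<Rightarrow> 'g topology \<Rightarrow> 'x topology \<Rightarrow> 'e topology \<Rightarrow> ('e \<Rightarrow> 'x)
     \<Rightarrow> ('e \<Rightarrow> 'g \<Rightarrow> 'e) \<Rightarrow> bool" where
  "numerable_bundle G TG TX TE p act \<longleftrightarrow> principal_bundle G TG TX TE p act \<and>
     (\<exists>\<Phi> :: ('x \<Rightarrow> real) set.
        (\<forall>u\<in>\<Phi>. continuous_map TX euclideanreal u \<and>
                 (\<forall>x\<in>topspace TX. 0 \<le> u x \<and> u x \<le> 1) \<and>
                 (\<exists>U. trivializing_open G TG TX TE p act U \<and>
                      {x \<in> topspace TX. u x > 0} \<subseteq> U)) \<and>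
        (\<forall>x\<in>topspace TX. \<exists>N. openin TX N \<and> x \<in> N \<and>
             finite {u\<in>\<Phi>. \<exists>y\<in>N. u y \<noteq> 0}) \<and>
        (\<forall>x\<in>topspace TX. (\<Sum>u\<in>{u\<in>\<Phi>. u x \<noteq> 0}. u x) = 1))"

definition bundle_gamma :: "'g monoid \<Rightarrow> ('e \<Rightarrow> 'g \<Rightarrow> 'e) \<Rightarrow> 'e \<Rightarrow> 'e \<Rightarrow> 'g" where
  "bundle_gamma G act y z = (THE g. g \<in> carrier G \<and> y = act z g)"

definition X_groupoid ::
  "'x topology \<Rightarrow> 'c topology \<Rightarrow> ('c \<Rightarrow> 'x) \<Rightarrow> ('c \<Rightarrow> 'x) \<Rightarrow> ('c \<Rightarrow> 'c \<Rightarrow> 'c)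
     \<Rightarrow> ('x \<Rightarrow> 'c) \<Rightarrow> ('c \<Rightarrow> 'c) \<Rightarrow> bool" where
  "X_groupoid TX TC \<alpha> \<beta> cmp un ci \<longleftrightarrow>
     continuous_map TC TX \<alpha> \<and> continuous_map TC TX \<beta> \<and>
     continuous_map (subtopology (prod_topology TC TC)
                       {(c1, c2). c1 \<in> topspace TC \<and> c2 \<in> topspace TC \<and> \<alpha> c1 = \<beta> c2})
                    TC (\<lambda>(c1, c2). cmp c1 c2) \<and>
     (\<forall>c1\<in>topspace TC. \<forall>c2\<in>topspace TC. \<alpha> c1 = \<beta> c2 \<longrightarrow>
        \<alpha> (cmp c1 c2) = \<alpha> c2 \<and> \<beta> (cmp c1 c2) = \<beta> c1) \<and>
     (\<forall>c1\<in>topspace TC. \<forall>c2\<in>topspace TC. \<forall>c3\<in>topspace TC.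
        \<alpha> c1 = \<beta> c2 \<and> \<alpha> c2 = \<beta> c3 \<longrightarrow> cmp (cmp c1 c2) c3 = cmp c1 (cmp c2 c3)) \<and>
     continuous_map TX TC un \<and>
     (\<forall>x\<in>topspace TX. \<alpha> (un x) = x \<and> \<beta> (un x) = x) \<and>
     (\<forall>c\<in>topspace TC. cmp (un (\<beta> c)) c = c \<and> cmp c (un (\<alpha> c)) = c) \<and>
     continuous_map TC TC ci \<and>
     (\<forall>c\<in>topspace TC. \<alpha> (ci c) = \<beta> c \<and> \<beta> (ci c) = \<alpha> c \<and>
        cmp c (ci c) = un (\<beta> c) \<and> cmp (ci c) c = un (\<alpha> c))"

definition fibre_prod :: "'c topology \<Rightarrow> 'e topology \<Rightarrow> ('c \<Rightarrow> 'x) \<Rightarrow> ('e \<Rightarrow> 'x) \<Rightarrow> ('c \<times> 'e) set" where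
  "fibre_prod TC TE \<alpha> p = {(c, z). c \<in> topspace TC \<and> z \<in> topspace TE \<and> \<alpha> c = p z}"

definition representations ::
  "'g monoid \<Rightarrow> 'c topology \<Rightarrow> ('c \<Rightarrow> 'x) \<Rightarrow> ('c \<Rightarrow> 'x) \<Rightarrow> ('c \<Rightarrow> 'c \<Rightarrow> 'c)
     \<Rightarrow> ('c \<Rightarrow> 'c) \<Rightarrow> 'e topology \<Rightarrow> ('e \<Rightarrow> 'x) \<Rightarrow> ('e \<Rightarrow> 'g \<Rightarrow> 'e)
     \<Rightarrow> ('c \<Rightarrow> 'e \<Rightarrow> 'e) set" where
  "representations G TC \<alpha> \<beta> cmp ci TE p act = {w.
     continuous_map (subtopology (prod_topology TC TE) (fibre_prod TC TE \<alpha> p)) TE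
        (\<lambda>(c, z). w c z) \<and>
     (\<forall>(c, z)\<in>fibre_prod TC TE \<alpha> p. p (w c z) = \<beta> c) \<and>
     (\<forall>c\<in>topspace TC. \<forall>d\<in>topspace TC. \<forall>z\<in>topspace TE.
        \<alpha> c = \<beta> d \<and> \<alpha> d = p z \<longrightarrow> w (cmp c d) z = w c (w d z)) \<and>
     (\<forall>(c, z)\<in>fibre_prod TC TE \<alpha> p. w (ci c) (w c z) = z) \<and>
     (\<forall>(c, z)\<in>fibre_prod TC TE \<alpha> p. \<forall>g\<in>carrier G. w c (act z g) = act (w c z) g)}"

definition gauge_group ::
  "'g monoid \<Rightarrow> 'e topology \<Rightarrow> ('e \<Rightarrow> 'x) \<Rightarrow> ('e \<Rightarrow> 'g \<Rightarrow> 'e) \<Rightarrow> ('e \<Rightarrow> 'e) set" where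
  "gauge_group G TE p act = {chi. homeomorphic_map TE TE chi \<and>
     (\<forall>z\<in>topspace TE. p (chi z) = p z) \<and>
     (\<forall>z\<in>topspace TE. \<forall>g\<in>carrier G. chi (act z g) = act (chi z) g)}"

definition gauge_action :: "'e topology \<Rightarrow> ('c \<Rightarrow> 'e \<Rightarrow> 'e) \<Rightarrow> ('e \<Rightarrow> 'e) \<Rightarrow> 'c \<Rightarrow> 'e \<Rightarrow> 'e" where
  "gauge_action TE w chi = (\<lambda>c z. inv_into (topspace TE) chi (w c (chi z)))"

definition ent_G ::
  "'g monoid \<Rightarrow> 'e topology \<Rightarrow> ('e \<Rightarrow> 'x) \<Rightarrow> ('e \<Rightarrow> 'g \<Rightarrow> 'e) \<Rightarrow> 'x set \<Rightarrow> 'g set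
     \<Rightarrow> (('e \<Rightarrow> 'e) \<times> ('e \<Rightarrow> 'e)) set" where
  "ent_G G TE p act K V = {(chi, chi'). chi \<in> gauge_group G TE p act \<and> chi' \<in> gauge_group G TE p act \<and>
     (\<forall>z\<in>topspace TE. p z \<in> K \<longrightarrow> bundle_gamma G act (chi z) (chi' z) \<in> V)}"

definition fund_ent_G ::
  "'g monoid \<Rightarrow> 'g topology \<Rightarrow> 'x topology \<Rightarrow> 'e topology \<Rightarrow> ('e \<Rightarrow> 'x) \<Rightarrow> ('e \<Rightarrow> 'g \<Rightarrow> 'e)
     \<Rightarrow> (('e \<Rightarrow> 'e) \<times> ('e \<Rightarrow> 'e)) set set" where
  "fund_ent_G G TG TX TE p act =
     {ent_G G TE p act K V | K V. compactin TX K \<and> V \<in> sym_nhds G TG}"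

definition ent_R ::
  "'g monoid \<Rightarrow> 'c topology \<Rightarrow> ('c \<Rightarrow> 'x) \<Rightarrow> ('c \<Rightarrow> 'x) \<Rightarrow> ('c \<Rightarrow> 'c \<Rightarrow> 'c)
     \<Rightarrow> ('c \<Rightarrow> 'c) \<Rightarrow> 'e topology \<Rightarrow> ('e \<Rightarrow> 'x) \<Rightarrow> ('e \<Rightarrow> 'g \<Rightarrow> 'e) \<Rightarrow> 'c set \<Rightarrow> 'g set
     \<Rightarrow> (('c \<Rightarrow> 'e \<Rightarrow> 'e) \<times> ('c \<Rightarrow> 'e \<Rightarrow> 'e)) set" where
  "ent_R G TC \<alpha> \<beta> cmp ci TE p act L V = {(w, w').
     w \<in> representations G TC \<alpha> \<beta> cmp ci TE p act \<and>
     w' \<in> representations G TC \<alpha> \<beta> cmp ci TE p act \<and>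
     (\<forall>c\<in>L. \<forall>z\<in>topspace TE. \<alpha> c = p z \<longrightarrow> bundle_gamma G act (w c z) (w' c z) \<in> V)}"

definition fund_ent_R ::
  "'g monoid \<Rightarrow> 'g topology \<Rightarrow> 'c topology \<Rightarrow> ('c \<Rightarrow> 'x) \<Rightarrow> ('c \<Rightarrow> 'x) \<Rightarrow> ('c \<Rightarrow> 'c \<Rightarrow> 'c)
     \<Rightarrow> ('c \<Rightarrow> 'c) \<Rightarrow> 'e topology \<Rightarrow> ('e \<Rightarrow> 'x) \<Rightarrow> ('e \<Rightarrow> 'g \<Rightarrow> 'e)
     \<Rightarrow> (('c \<Rightarrow> 'e \<Rightarrow> 'e) \<times> ('c \<Rightarrow> 'e \<Rightarrow> 'e)) set set" where
  "fund_ent_R G TG TC \<alpha> \<beta> cmp ci TE p act =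
     {ent_R G TC \<alpha> \<beta> cmp ci TE p act L V | L V. compactin TC L \<and> V \<in> sym_nhds G TG}"

definition prod_ent_base :: "('a \<times> 'a) set set \<Rightarrow> ('b \<times> 'b) set set \<Rightarrow> (('a \<times> 'b) \<times> ('a \<times> 'b)) set set" where
  "prod_ent_base B1 B2 =
     {{((a, b), (a', b')). (a, a') \<in> U1 \<and> (b, b') \<in> U2} | U1 U2. U1 \<in> B1 \<and> U2 \<in> B2}"

definition unif_cont_base :: "('a \<times> 'a) set set \<Rightarrow> ('b \<times> 'b) set set \<Rightarrow> ('a \<Rightarrow> 'b) \<Rightarrow> bool" where
  "unif_cont_base Bs Bt f \<longleftrightarrow> (\<forall>N\<in>Bt. \<exists>M\<in>Bs. \<forall>(x, y)\<in>M. (f x, f y) \<in> N)"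

end

theory Submission
  imports Defs
begin

lemma pb_basic:
  assumes pb: "principal_bundle G TG TX TE p act"
  shows pb_group: "group G"
    and pb_top: "topspace TG = carrier G"
    and pb_act_in: "\<And>z g. z \<in> topspace TE \<Longrightarrow> g \<in> carrier G \<Longrightarrow> act z g \<in> topspace TE"
    and pb_act_one: "\<And>z. z \<in> topspace TE \<Longrightarrow> act z \<one>\<^bsub>G\<^esub> = z"
    and pb_act_mult: "\<And>z g h. z \<in> topspace TE \<Longrightarrow> g \<in> carrier G \<Longrightarrow> h \<in> carrier G \<Longrightarrow>
          act (act z g) h = act z (g \<otimes>\<^bsub>G\<^esub> h)"
    and pb_act_p: "\<And>z g. z \<in> topspace TE \<Longrightarrow> g \<in> carrier G \<Longrightarrow> p (act z g) = p z"
    and pb_p_in: "\<And>z. z \<in> topspace TE \<Longrightarrow> p z \<in> topspace TX"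
proof -
  have tg: "topological_group G TG" using pb by (simp add: principal_bundle_def)
  then show "group G" "topspace TG = carrier G" by (auto simp: topological_group_def)
  have c: "continuous_map (prod_topology TE TG) TE (\<lambda>(z, g). act z g)"
    using pb by (simp add: principal_bundle_def)
  show "act z g \<in> topspace TE" if "z \<in> topspace TE" "g \<in> carrier G" for z g
    using continuous_map_image_subset_topspace[OF c] that \<open>topspace TG = carrier G\<close> by force
  show "\<And>z. z \<in> topspace TE \<Longrightarrow> act z \<one>\<^bsub>G\<^esub> = z" using pb by (simp add: principal_bundle_def)
  show "\<And>z g h. z \<in> topspace TE \<Longrightarrow> g \<in> carrier G \<Longrightarrow> h \<in> carrier G \<Longrightarrow>
          act (act z g) h = act z (g \<otimes>\<^bsub>G\<^esub> h)" using pb by (simp add: principal_bundle_def)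
  show "\<And>z g. z \<in> topspace TE \<Longrightarrow> g \<in> carrier G \<Longrightarrow> p (act z g) = p z"
    using pb by (simp add: principal_bundle_def)
  show "\<And>z. z \<in> topspace TE \<Longrightarrow> p z \<in> topspace TX"
    using pb continuous_map_image_subset_topspace[of TE TX p] unfolding principal_bundle_def by blast
qed

lemma pb_fibre:
  assumes pb: "principal_bundle G TG TX TE p act"
    and z: "z \<in> topspace TE"
  obtains s where "s \<in> topspace TE \<inter> p -` {p z} \<rightarrow> carrier G"
    "\<And>y. y \<in> topspace TE \<Longrightarrow> p y = p z \<Longrightarrow> \<forall>g\<in>carrier G. s (act y g) = s y \<otimes>\<^bsub>G\<^esub> g"
    "\<And>y y'. y \<in> topspace TE \<Longrightarrow> y' \<in> topspace TE \<Longrightarrow> p y = p z \<Longrightarrow> p y' = p z \<Longrightarrow> s y = s y' \<Longrightarrow> y = y'"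
proof -
  have "p z \<in> topspace TX" using pb_p_in[OF pb z] .
  then obtain U where U: "p z \<in> U" "trivializing_open G TG TX TE p act U"
    using pb unfolding principal_bundle_def by blast
  then obtain \<phi> where hm: "homeomorphic_map (subtopology TE {z \<in> topspace TE. p z \<in> U})
                            (prod_topology (subtopology TX U) TG) \<phi>"
     and ph: "\<forall>z \<in> topspace TE. p z \<in> U \<longrightarrow>
             fst (\<phi> z) = p z \<and>
             (\<forall>g\<in>carrier G. \<phi> (act z g) = (fst (\<phi> z), snd (\<phi> z) \<otimes>\<^bsub>G\<^esub> g))"
    unfolding trivializing_open_def by blast
  have inj: "inj_on \<phi> {y \<in> topspace TE. p y \<in> U}"
  proof -
    have "topspace TE \<inter> {z \<in> topspace TE. p z \<in> U} = {y \<in> topspace TE. p y \<in> U}" by auto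
    then show ?thesis using homeomorphic_imp_injective_map[OF hm] by simp
  qed
  have img: "\<phi> y \<in> topspace (prod_topology (subtopology TX U) TG)" if "y \<in> topspace TE" "p y \<in> U" for y
    using homeomorphic_imp_surjective_map[OF hm] that by auto
  show ?thesis
  proof (rule that[of "\<lambda>y. snd (\<phi> y)"])
    show "(\<lambda>y. snd (\<phi> y)) \<in> topspace TE \<inter> p -` {p z} \<rightarrow> carrier G"
      using img U pb_top[OF pb] by (auto simp: mem_Times_iff)
    show "\<forall>g\<in>carrier G. snd (\<phi> (act y g)) = snd (\<phi> y) \<otimes>\<^bsub>G\<^esub> g" if "y \<in> topspace TE" "p y = p z" for y
      using ph that U by auto
    show "y = y'" if "y \<in> topspace TE" "y' \<in> topspace TE" "p y = p z" "p y' = p z" "snd (\<phi> y) = snd (\<phi> y')" for y y'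
    proof -
      have "\<phi> y = \<phi> y'" using ph that U by (metis prod.expand)
      then show ?thesis using inj that U by (auto simp: inj_on_def)
    qed
  qed
qed

lemma pb_free:
  assumes pb: "principal_bundle G TG TX TE p act"
    and z: "z \<in> topspace TE" and g: "g \<in> carrier G" and h: "h \<in> carrier G"
    and eq: "act z g = act z h"
  shows "g = h"
proof -
  obtain s where s1: "s \<in> topspace TE \<inter> p -` {p z} \<rightarrow> carrier G"
    and s2: "\<And>y. y \<in> topspace TE \<Longrightarrow> p y = p z \<Longrightarrow> \<forall>g\<in>carrier G. s (act y g) = s y \<otimes>\<^bsub>G\<^esub> g"
    using pb_fibre[OF pb z] by metis
  have "s z \<otimes>\<^bsub>G\<^esub> g = s z \<otimes>\<^bsub>G\<^esub> h" using s2[OF z refl] g h eq by metis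
  moreover have "s z \<in> carrier G" using s1 z by auto
  ultimately show ?thesis using group.Units_eq[OF pb_group[OF pb]] monoid.Units_l_cancel[OF group.is_monoid[OF pb_group[OF pb]]] g h by blast
qed

lemma pb_trans:
  assumes pb: "principal_bundle G TG TX TE p act"
    and z: "z \<in> topspace TE" and y: "y \<in> topspace TE" and pyz: "p y = p z"
  shows "\<exists>g\<in>carrier G. y = act z g"
proof -
  obtain s where s1: "s \<in> topspace TE \<inter> p -` {p z} \<rightarrow> carrier G"
    and s2: "\<And>y. y \<in> topspace TE \<Longrightarrow> p y = p z \<Longrightarrow> \<forall>g\<in>carrier G. s (act y g) = s y \<otimes>\<^bsub>G\<^esub> g"
    and s3: "\<And>y y'. y \<in> topspace TE \<Longrightarrow> y' \<in> topspace TE \<Longrightarrow> p y = p z \<Longrightarrow> p y' = p z \<Longrightarrow> s y = s y' \<Longrightarrow> y = y'"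
    using pb_fibre[OF pb z] by metis
  interpret group G using pb_group[OF pb] .
  have sz: "s z \<in> carrier G" and sy: "s y \<in> carrier G" using s1 z y pyz by auto
  define g where "g = inv\<^bsub>G\<^esub> (s z) \<otimes>\<^bsub>G\<^esub> s y"
  have g: "g \<in> carrier G" using sz sy g_def by simp
  have "s (act z g) = s z \<otimes>\<^bsub>G\<^esub> g" using s2[OF z refl] g by blast
  also have "\<dots> = s y" using sz sy by (simp add: g_def m_assoc[symmetric])
  finally have "s (act z g) = s y" .
  moreover have "act z g \<in> topspace TE" "p (act z g) = p z" using pb_act_in[OF pb z g] pb_act_p[OF pb z g] .
  ultimately have "act z g = y" using s3 y pyz by metis
  then show ?thesis using g by metis
qed

lemma gamma_props:
  assumes pb: "principal_bundle G TG TX TE p act"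
    and z: "z \<in> topspace TE" and y: "y \<in> topspace TE" and pyz: "p y = p z"
  shows "bundle_gamma G act y z \<in> carrier G \<and> y = act z (bundle_gamma G act y z)"
proof -
  obtain g where g: "g \<in> carrier G" "y = act z g" using pb_trans[OF assms] by blast
  have "\<exists>!g. g \<in> carrier G \<and> y = act z g"
    using g pb_free[OF pb z] by metis
  then show ?thesis unfolding bundle_gamma_def by (rule theI')
qed

lemma gamma_eq:
  assumes pb: "principal_bundle G TG TX TE p act"
    and z: "z \<in> topspace TE" and g: "g \<in> carrier G"
  shows "bundle_gamma G act (act z g) z = g"
proof -
  have "\<exists>!h. h \<in> carrier G \<and> act z g = act z h"
    using g pb_free[OF pb z] by metis
  then show ?thesis unfolding bundle_gamma_def by (rule the1_equality) (use g in auto)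
qed

lemma gauge_props:
  assumes chi: "chi \<in> gauge_group G TE p act"
  defines "\<psi> \<equiv> inv_into (topspace TE) chi"
  shows gg_in: "\<And>z. z \<in> topspace TE \<Longrightarrow> chi z \<in> topspace TE"
    and gg_inv_in: "\<And>v. v \<in> topspace TE \<Longrightarrow> \<psi> v \<in> topspace TE"
    and gg_f_inv: "\<And>v. v \<in> topspace TE \<Longrightarrow> chi (\<psi> v) = v"
    and gg_inv_f: "\<And>z. z \<in> topspace TE \<Longrightarrow> \<psi> (chi z) = z"
    and gg_cont: "continuous_map TE TE chi"
    and gg_inv_cont: "continuous_map TE TE \<psi>"
    and gg_p: "\<And>z. z \<in> topspace TE \<Longrightarrow> p (chi z) = p z"
    and gg_inv_p: "\<And>v. v \<in> topspace TE \<Longrightarrow> p (\<psi> v) = p v"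
    and gg_eqv: "\<And>z g. z \<in> topspace TE \<Longrightarrow> g \<in> carrier G \<Longrightarrow> chi (act z g) = act (chi z) g"
proof -
  have hm: "homeomorphic_map TE TE chi" and pp: "\<forall>z\<in>topspace TE. p (chi z) = p z"
    and eq: "\<forall>z\<in>topspace TE. \<forall>g\<in>carrier G. chi (act z g) = act (chi z) g"
    using chi by (auto simp: gauge_group_def)
  have surj: "chi ` topspace TE = topspace TE" using homeomorphic_imp_surjective_map[OF hm] .
  have inj: "inj_on chi (topspace TE)" using homeomorphic_imp_injective_map[OF hm] .
  show in1: "\<And>z. z \<in> topspace TE \<Longrightarrow> chi z \<in> topspace TE" using surj by blast
  show in2: "\<And>v. v \<in> topspace TE \<Longrightarrow> \<psi> v \<in> topspace TE"
    unfolding \<psi>_def using surj by (metis inv_into_into)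
  show fi: "\<And>v. v \<in> topspace TE \<Longrightarrow> chi (\<psi> v) = v"
    unfolding \<psi>_def using surj by (metis f_inv_into_f)
  show "\<And>z. z \<in> topspace TE \<Longrightarrow> \<psi> (chi z) = z"
    unfolding \<psi>_def using inj by (metis inv_into_f_f)
  show "continuous_map TE TE chi" using homeomorphic_imp_continuous_map[OF hm] .
  show "continuous_map TE TE \<psi>"
    unfolding \<psi>_def
    using open_eq_continuous_inverse_map[of concl: TE TE chi "inv_into (topspace TE) chi"]
      homeomorphic_imp_open_map[OF hm] in1 inj surj
    by (metis \<psi>_def fi in2 inv_into_f_f)
  show "\<And>z. z \<in> topspace TE \<Longrightarrow> p (chi z) = p z" using pp by blast
  show "\<And>v. v \<in> topspace TE \<Longrightarrow> p (\<psi> v) = p v" using pp in2 fi by metis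
  show "\<And>z g. z \<in> topspace TE \<Longrightarrow> g \<in> carrier G \<Longrightarrow> chi (act z g) = act (chi z) g"
    using eq by blast
qed

lemma gauge_inv_eqv:
  assumes pb: "principal_bundle G TG TX TE p act"
    and chi: "chi \<in> gauge_group G TE p act"
    and v: "v \<in> topspace TE" and g: "g \<in> carrier G"
  shows "inv_into (topspace TE) chi (act v g) = act (inv_into (topspace TE) chi v) g"
proof -
  let ?\<psi> = "inv_into (topspace TE) chi"
  have a: "?\<psi> v \<in> topspace TE" using gg_inv_in[OF chi v] .
  have "chi (act (?\<psi> v) g) = act v g"
    using gg_eqv[OF chi a g] gg_f_inv[OF chi v] by simp
  moreover have "act (?\<psi> v) g \<in> topspace TE" using pb_act_in[OF pb a g] .
  ultimately show ?thesis using gg_inv_f[OF chi] by metis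
qed

lemma rep_in:
  assumes w: "w \<in> representations G TC \<alpha> \<beta> cmp ci TE p act"
    and c: "c \<in> topspace TC" and z: "z \<in> topspace TE" and e: "\<alpha> c = p z"
  shows "w c z \<in> topspace TE" "p (w c z) = \<beta> c"
proof -
  have cw: "continuous_map (subtopology (prod_topology TC TE) (fibre_prod TC TE \<alpha> p)) TE
        (\<lambda>(c, z). w c z)" using w by (simp add: representations_def)
  have "(c, z) \<in> topspace (subtopology (prod_topology TC TE) (fibre_prod TC TE \<alpha> p))"
    using c z e by (simp add: fibre_prod_def)
  then show "w c z \<in> topspace TE" using continuous_map_image_subset_topspace[OF cw] by force
  show "p (w c z) = \<beta> c" using w c z e by (auto simp: representations_def fibre_prod_def)
qed

lemma gauge_action_rep:
  assumes pb: "principal_bundle G TG TX TE p act"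
    and w: "w \<in> representations G TC \<alpha> \<beta> cmp ci TE p act"
    and chi: "chi \<in> gauge_group G TE p act"
  shows "gauge_action TE w chi \<in> representations G TC \<alpha> \<beta> cmp ci TE p act"
proof -
  let ?\<psi> = "inv_into (topspace TE) chi"
  let ?S = "subtopology (prod_topology TC TE) (fibre_prod TC TE \<alpha> p)"
  have cw: "continuous_map ?S TE (\<lambda>(c, z). w c z)" using w by (simp add: representations_def)
  have wp: "\<forall>(c, z)\<in>fibre_prod TC TE \<alpha> p. p (w c z) = \<beta> c"
   and wc: "\<forall>c\<in>topspace TC. \<forall>d\<in>topspace TC. \<forall>z\<in>topspace TE.
        \<alpha> c = \<beta> d \<and> \<alpha> d = p z \<longrightarrow> w (cmp c d) z = w c (w d z)"
   and wi: "\<forall>(c, z)\<in>fibre_prod TC TE \<alpha> p. w (ci c) (w c z) = z"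
   and we: "\<forall>(c, z)\<in>fibre_prod TC TE \<alpha> p. \<forall>g\<in>carrier G. w c (act z g) = act (w c z) g"
    using w by (simp_all add: representations_def)
  have ch: "continuous_map ?S ?S (\<lambda>(c, z). (c, chi z))"
  proof (subst continuous_map_in_subtopology, intro conjI)
    show "continuous_map ?S (prod_topology TC TE) (\<lambda>(c, z). (c, chi z))"
      unfolding continuous_map_pairwise o_def
    proof
      show "continuous_map ?S TC (\<lambda>x. fst (case x of (c, z) \<Rightarrow> (c, chi z)))"
        by (simp add: case_prod_unfold continuous_map_from_subtopology continuous_map_fst)
      have "continuous_map ?S TE (chi \<circ> snd)"
        by (intro continuous_map_compose[OF _ gg_cont[OF chi]] continuous_map_from_subtopology continuous_map_snd)
      then show "continuous_map ?S TE (\<lambda>x. snd (case x of (c, z) \<Rightarrow> (c, chi z)))"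
        by (simp add: case_prod_unfold o_def)
    qed
    show "(\<lambda>(c, z). (c, chi z)) \<in> topspace ?S \<rightarrow> fibre_prod TC TE \<alpha> p"
      by (auto simp: fibre_prod_def gg_in[OF chi] gg_p[OF chi])
  qed
  have cont: "continuous_map ?S TE (?\<psi> \<circ> ((\<lambda>(c, z). w c z) \<circ> (\<lambda>(c, z). (c, chi z))))"
    by (rule continuous_map_compose[OF continuous_map_compose[OF ch cw] gg_inv_cont[OF chi]])
  have feq: "(\<lambda>(c, z). gauge_action TE w chi c z) = ?\<psi> \<circ> ((\<lambda>(c, z). w c z) \<circ> (\<lambda>(c, z). (c, chi z)))"
    by (auto simp: gauge_action_def)
  show ?thesis
    unfolding representations_def
  proof (intro CollectI conjI)
    show "continuous_map ?S TE (\<lambda>(c, z). gauge_action TE w chi c z)" using cont feq by simp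
    show "\<forall>(c, z)\<in>fibre_prod TC TE \<alpha> p. p (gauge_action TE w chi c z) = \<beta> c"
    proof (clarify)
      fix c z assume "(c, z) \<in> fibre_prod TC TE \<alpha> p"
      then have c: "c \<in> topspace TC" and z: "z \<in> topspace TE" and e: "\<alpha> c = p z" by (auto simp: fibre_prod_def)
      have cz: "chi z \<in> topspace TE" "\<alpha> c = p (chi z)" using gg_in[OF chi z] gg_p[OF chi z] e by auto
      show "p (gauge_action TE w chi c z) = \<beta> c"
        unfolding gauge_action_def using gg_inv_p[OF chi rep_in(1)[OF w c cz]] rep_in(2)[OF w c cz] by simp
    qed
    show "\<forall>c\<in>topspace TC. \<forall>d\<in>topspace TC. \<forall>z\<in>topspace TE.
        \<alpha> c = \<beta> d \<and> \<alpha> d = p z \<longrightarrow> gauge_action TE w chi (cmp c d) z = gauge_action TE w chi c (gauge_action TE w chi d z)"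
    proof (intro ballI impI)
      fix c d z assume c: "c \<in> topspace TC" and d: "d \<in> topspace TC" and z: "z \<in> topspace TE"
        and e: "\<alpha> c = \<beta> d \<and> \<alpha> d = p z"
      have cz: "chi z \<in> topspace TE" "\<alpha> d = p (chi z)" using gg_in[OF chi z] gg_p[OF chi z] e by auto
      have v: "w d (chi z) \<in> topspace TE" using rep_in(1)[OF w d cz] .
      show "gauge_action TE w chi (cmp c d) z = gauge_action TE w chi c (gauge_action TE w chi d z)"
        unfolding gauge_action_def using gg_f_inv[OF chi v] wc c d cz e by simp
    qed
    show "\<forall>(c, z)\<in>fibre_prod TC TE \<alpha> p. gauge_action TE w chi (ci c) (gauge_action TE w chi c z) = z"
    proof (clarify)
      fix c z assume cz0: "(c, z) \<in> fibre_prod TC TE \<alpha> p"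
      then have c: "c \<in> topspace TC" and z: "z \<in> topspace TE" and e: "\<alpha> c = p z" by (auto simp: fibre_prod_def)
      have cz: "chi z \<in> topspace TE" "\<alpha> c = p (chi z)" using gg_in[OF chi z] gg_p[OF chi z] e by auto
      have v: "w c (chi z) \<in> topspace TE" using rep_in(1)[OF w c cz] .
      have "(c, chi z) \<in> fibre_prod TC TE \<alpha> p" using c cz by (simp add: fibre_prod_def)
      then have "w (ci c) (w c (chi z)) = chi z" using wi by blast
      then show "gauge_action TE w chi (ci c) (gauge_action TE w chi c z) = z"
        unfolding gauge_action_def using gg_f_inv[OF chi v] gg_inv_f[OF chi z] by simp
    qed
    show "\<forall>(c, z)\<in>fibre_prod TC TE \<alpha> p. \<forall>g\<in>carrier G. gauge_action TE w chi c (act z g) = act (gauge_action TE w chi c z) g"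
    proof (clarify)
      fix c z g assume cz0: "(c, z) \<in> fibre_prod TC TE \<alpha> p" and g: "g \<in> carrier G"
      then have c: "c \<in> topspace TC" and z: "z \<in> topspace TE" and e: "\<alpha> c = p z" by (auto simp: fibre_prod_def)
      have cz: "chi z \<in> topspace TE" "\<alpha> c = p (chi z)" using gg_in[OF chi z] gg_p[OF chi z] e by auto
      have v: "w c (chi z) \<in> topspace TE" using rep_in(1)[OF w c cz] .
      have "(c, chi z) \<in> fibre_prod TC TE \<alpha> p" using c cz by (simp add: fibre_prod_def)
      then have "w c (act (chi z) g) = act (w c (chi z)) g" using we g by blast
      then show "gauge_action TE w chi c (act z g) = act (gauge_action TE w chi c z) g"
        unfolding gauge_action_def using gg_eqv[OF chi z g] gauge_inv_eqv[OF pb chi v g] by simp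
    qed
  qed
qed

lemma tg_half:
  assumes tg: "topological_group G TG" and V: "openin TG V" and one: "\<one>\<^bsub>G\<^esub> \<in> V"
  shows "\<exists>U. openin TG U \<and> \<one>\<^bsub>G\<^esub> \<in> U \<and> U \<subseteq> V \<and> (\<forall>x\<in>U. \<forall>y\<in>U. x \<otimes>\<^bsub>G\<^esub> y \<in> V)"
proof -
  have grp: "group G" and top: "topspace TG = carrier G"
    and m: "continuous_map (prod_topology TG TG) TG (\<lambda>(x, y). x \<otimes>\<^bsub>G\<^esub> y)"
    using tg by (auto simp: topological_group_def)
  let ?P = "{xy \<in> topspace (prod_topology TG TG). (\<lambda>(x, y). x \<otimes>\<^bsub>G\<^esub> y) xy \<in> V}"
  have P: "openin (prod_topology TG TG) ?P" using openin_continuous_map_preimage[OF m V] .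
  have oc: "\<one>\<^bsub>G\<^esub> \<in> carrier G" using group.is_monoid[OF grp] monoid.one_closed by blast
  have "\<one>\<^bsub>G\<^esub> \<otimes>\<^bsub>G\<^esub> \<one>\<^bsub>G\<^esub> = \<one>\<^bsub>G\<^esub>"
    using oc group.is_monoid[OF grp] monoid.l_one by metis
  then have mem: "(\<one>\<^bsub>G\<^esub>, \<one>\<^bsub>G\<^esub>) \<in> ?P"
    using oc one top by simp
  obtain A B where AB: "openin TG A" "openin TG B" "\<one>\<^bsub>G\<^esub> \<in> A" "\<one>\<^bsub>G\<^esub> \<in> B" "A \<times> B \<subseteq> ?P"
    using openin_prod_topology_alt[THEN iffD1, OF P, rule_format, OF mem] by (elim exE conjE)
  show ?thesis
  proof (intro exI conjI)
    show "openin TG (A \<inter> B \<inter> V)" by (intro openin_Int AB(1) AB(2) V)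
    show "\<one>\<^bsub>G\<^esub> \<in> A \<inter> B \<inter> V" using AB one by auto
    show "A \<inter> B \<inter> V \<subseteq> V" by auto
    show "\<forall>x\<in>A \<inter> B \<inter> V. \<forall>y\<in>A \<inter> B \<inter> V. x \<otimes>\<^bsub>G\<^esub> y \<in> V"
    proof (intro ballI)
      fix x y assume "x \<in> A \<inter> B \<inter> V" "y \<in> A \<inter> B \<inter> V"
      then have "(x, y) \<in> A \<times> B" by simp
      then have "(x, y) \<in> ?P" by (rule subsetD[OF AB(5)])
      then show "x \<otimes>\<^bsub>G\<^esub> y \<in> V" by simp
    qed
  qed
qed

lemma tg_triple:
  assumes tg: "topological_group G TG" and V: "openin TG V" and one: "\<one>\<^bsub>G\<^esub> \<in> V"
  shows "\<exists>W\<in>sym_nhds G TG. \<forall>a\<in>W. \<forall>b\<in>W. \<forall>d\<in>W. a \<otimes>\<^bsub>G\<^esub> b \<otimes>\<^bsub>G\<^esub> d \<in> V"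
proof -
  have grp: "group G" and top: "topspace TG = carrier G"
    and ic: "continuous_map TG TG (\<lambda>x. inv\<^bsub>G\<^esub> x)"
    using tg by (auto simp: topological_group_def)
  obtain U1 where U1: "openin TG U1" "\<one>\<^bsub>G\<^esub> \<in> U1" "U1 \<subseteq> V" "\<forall>x\<in>U1. \<forall>y\<in>U1. x \<otimes>\<^bsub>G\<^esub> y \<in> V"
    using tg_half[OF tg V one] by blast
  obtain U2 where U2: "openin TG U2" "\<one>\<^bsub>G\<^esub> \<in> U2" "U2 \<subseteq> U1" "\<forall>x\<in>U2. \<forall>y\<in>U2. x \<otimes>\<^bsub>G\<^esub> y \<in> U1"
    using tg_half[OF tg U1(1,2)] by blast
  define W where "W = {x \<in> topspace TG. inv\<^bsub>G\<^esub> x \<in> U2} \<inter> U2"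
  have U2c: "U2 \<subseteq> carrier G" using openin_subset[OF U2(1)] top by simp
  have oc: "\<one>\<^bsub>G\<^esub> \<in> carrier G" using group.is_monoid[OF grp] monoid.one_closed by blast
  have "W \<in> sym_nhds G TG"
    unfolding sym_nhds_def
  proof (intro CollectI conjI ballI)
    show "openin TG W" unfolding W_def
      by (intro openin_Int openin_continuous_map_preimage[OF ic] U2(1))
    show "\<one>\<^bsub>G\<^esub> \<in> W" unfolding W_def using U2(2) oc top monoid.inv_one[OF group.is_monoid[OF grp]] by auto
    fix g assume "g \<in> W"
    then show "inv\<^bsub>G\<^esub> g \<in> W" unfolding W_def using U2c top group.inv_inv[OF grp] group.inv_closed[OF grp]
      by auto
  qed
  moreover have "\<forall>a\<in>W. \<forall>b\<in>W. \<forall>d\<in>W. a \<otimes>\<^bsub>G\<^esub> b \<otimes>\<^bsub>G\<^esub> d \<in> V"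
  proof (intro ballI)
    fix a b d assume "a \<in> W" "b \<in> W" "d \<in> W"
    then have "a \<in> U2" "b \<in> U2" "d \<in> U2" unfolding W_def by auto
    then have "a \<otimes>\<^bsub>G\<^esub> b \<in> U1" "d \<in> U1" using U2(3,4) by auto
    then show "a \<otimes>\<^bsub>G\<^esub> b \<otimes>\<^bsub>G\<^esub> d \<in> V" using U1(4) by blast
  qed
  ultimately show ?thesis by blast
qed

lemma core:
  assumes pb: "principal_bundle G TG TX TE p act"
    and w: "w \<in> representations G TC \<alpha> \<beta> cmp ci TE p act"
    and w': "w' \<in> representations G TC \<alpha> \<beta> cmp ci TE p act"
    and chi: "chi \<in> gauge_group G TE p act"
    and chi': "chi' \<in> gauge_group G TE p act"
    and c: "c \<in> topspace TC" and z: "z \<in> topspace TE" and e: "\<alpha> c = p z"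
    and ha: "\<forall>t\<in>topspace TE. \<alpha> c = p t \<longrightarrow> bundle_gamma G act (w c t) (w' c t) \<in> W"
    and hb: "\<forall>t\<in>topspace TE. p t = \<alpha> c \<or> p t = \<beta> c \<longrightarrow> bundle_gamma G act (chi t) (chi' t) \<in> W"
    and trip: "\<forall>a\<in>W. \<forall>b\<in>W. \<forall>d\<in>W. a \<otimes>\<^bsub>G\<^esub> b \<otimes>\<^bsub>G\<^esub> d \<in> V"
    and sym: "\<forall>g\<in>W. inv\<^bsub>G\<^esub> g \<in> W"
  shows "bundle_gamma G act (gauge_action TE w chi c z) (gauge_action TE w' chi' c z) \<in> V"
proof -
  have grp: "group G" using pb_group[OF pb] .
  define t where "t = chi' z"
  have t: "t \<in> topspace TE" "p t = \<alpha> c" using gg_in[OF chi' z] gg_p[OF chi' z] e t_def by auto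
  define u where "u = w c t"
  define u' where "u' = w' c t"
  have u: "u \<in> topspace TE" "p u = \<beta> c" using rep_in[OF w c t(1)] t(2) u_def by auto
  have u': "u' \<in> topspace TE" "p u' = \<beta> c" using rep_in[OF w' c t(1)] t(2) u'_def by auto
  define a where "a = bundle_gamma G act u u'"
  have a: "a \<in> carrier G" "u = act u' a" using gamma_props[OF pb u'(1) u(1)] u(2) u'(2) a_def by auto
  have aW: "a \<in> W" using ha t a_def u_def u'_def by auto
  define b where "b = bundle_gamma G act (chi z) (chi' z)"
  have b: "b \<in> carrier G" "chi z = act t b"
    using gamma_props[OF pb gg_in[OF chi' z] gg_in[OF chi z]] gg_p[OF chi z] gg_p[OF chi' z] b_def t_def by auto
  have bW: "b \<in> W" using hb z e b_def by auto
  define v where "v = w c (chi z)"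
  have we: "\<forall>(c, z)\<in>fibre_prod TC TE \<alpha> p. \<forall>g\<in>carrier G. w c (act z g) = act (w c z) g"
    using w by (simp add: representations_def)
  have "(c, t) \<in> fibre_prod TC TE \<alpha> p" using c t by (simp add: fibre_prod_def)
  then have "v = act u b" using we b unfolding v_def u_def by auto
  also have "\<dots> = act u' (a \<otimes>\<^bsub>G\<^esub> b)" using a b pb_act_mult[OF pb u'(1)] by simp
  finally have v: "v = act u' (a \<otimes>\<^bsub>G\<^esub> b)" .
  have vin: "v \<in> topspace TE" "p v = \<beta> c"
    using rep_in[OF w c gg_in[OF chi z]] gg_p[OF chi z] e v_def by auto
  define q where "q = inv_into (topspace TE) chi v"
  define q' where "q' = inv_into (topspace TE) chi' u'"
  have q: "q \<in> topspace TE" "p q = \<beta> c" "chi q = v"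
    using gg_inv_in[OF chi vin(1)] gg_inv_p[OF chi vin(1)] gg_f_inv[OF chi vin(1)] vin(2) q_def by auto
  have q': "q' \<in> topspace TE" "p q' = \<beta> c" "chi' q' = u'"
    using gg_inv_in[OF chi' u'(1)] gg_inv_p[OF chi' u'(1)] gg_f_inv[OF chi' u'(1)] u'(2) q'_def by auto
  have lhs: "gauge_action TE w chi c z = q" unfolding gauge_action_def q_def v_def ..
  have rhs: "gauge_action TE w' chi' c z = q'" unfolding gauge_action_def q'_def u'_def t_def ..
  define g0 where "g0 = bundle_gamma G act q q'"
  have g0: "g0 \<in> carrier G" "q = act q' g0" using gamma_props[OF pb q'(1) q(1)] q(2) q'(2) g0_def by auto
  define d where "d = bundle_gamma G act (chi q) (chi' q)"
  have d: "d \<in> carrier G" "chi q = act (chi' q) d"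
    using gamma_props[OF pb gg_in[OF chi' q(1)] gg_in[OF chi q(1)]] gg_p[OF chi q(1)] gg_p[OF chi' q(1)] d_def by auto
  have dW: "d \<in> W" using hb q d_def by auto
  have "chi' q = act u' g0" using g0 gg_eqv[OF chi' q'(1) g0(1)] q'(3) by simp
  then have "chi q = act u' (g0 \<otimes>\<^bsub>G\<^esub> d)" using d g0 pb_act_mult[OF pb u'(1)] by simp
  then have "act u' (g0 \<otimes>\<^bsub>G\<^esub> d) = act u' (a \<otimes>\<^bsub>G\<^esub> b)" using q(3) v by simp
  then have eq: "g0 \<otimes>\<^bsub>G\<^esub> d = a \<otimes>\<^bsub>G\<^esub> b"
    using pb_free[OF pb u'(1)] g0 d a b group.is_monoid[OF grp] monoid.m_closed by metis
  have "g0 = a \<otimes>\<^bsub>G\<^esub> b \<otimes>\<^bsub>G\<^esub> inv\<^bsub>G\<^esub> d"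
  proof -
    interpret group G by (rule grp)
    have "g0 = g0 \<otimes>\<^bsub>G\<^esub> d \<otimes>\<^bsub>G\<^esub> inv\<^bsub>G\<^esub> d" using g0(1) d(1) by (simp add: m_assoc)
    then show ?thesis using eq by simp
  qed
  moreover have "inv\<^bsub>G\<^esub> d \<in> W" using sym dW by blast
  ultimately have "g0 \<in> V" using trip aW bW by blast
  then show ?thesis using lhs rhs g0_def by simp
qed

theorem proposition3p3:
  fixes G :: "'g monoid" and TG :: "'g topology"
    and TX :: "'x topology" and TE :: "'e topology" and p :: "'e \<Rightarrow> 'x"
    and act :: "'e \<Rightarrow> 'g \<Rightarrow> 'e"
    and TC :: "'c topology" and \<alpha> \<beta> :: "'c \<Rightarrow> 'x" and cmp :: "'c \<Rightarrow> 'c \<Rightarrow> 'c"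
    and un :: "'x \<Rightarrow> 'c" and ci :: "'c \<Rightarrow> 'c"
  assumes "SIN_group G TG"
    and "numerable_bundle G TG TX TE p act"
    and "X_groupoid TX TC \<alpha> \<beta> cmp un ci"
  shows "(\<forall>w\<in>representations G TC \<alpha> \<beta> cmp ci TE p act. \<forall>chi\<in>gauge_group G TE p act.
            gauge_action TE w chi \<in> representations G TC \<alpha> \<beta> cmp ci TE p act) \<and>
         unif_cont_base
           (prod_ent_base (fund_ent_R G TG TC \<alpha> \<beta> cmp ci TE p act) (fund_ent_G G TG TX TE p act))
           (fund_ent_R G TG TC \<alpha> \<beta> cmp ci TE p act)
           (\<lambda>(w, chi). gauge_action TE w chi)"
proof -
  have pb: "principal_bundle G TG TX TE p act" using assms(2) by (simp add: numerable_bundle_def)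
  have tg: "topological_group G TG" using pb by (simp add: principal_bundle_def)
  have ca: "continuous_map TC TX \<alpha>" and cb: "continuous_map TC TX \<beta>"
    using assms(3) by (simp_all add: X_groupoid_def)
  let ?R = "representations G TC \<alpha> \<beta> cmp ci TE p act"
  let ?GG = "gauge_group G TE p act"
  have P1: "\<forall>w\<in>?R. \<forall>chi\<in>?GG. gauge_action TE w chi \<in> ?R"
    using gauge_action_rep[OF pb] by blast
  have P2: "unif_cont_base
           (prod_ent_base (fund_ent_R G TG TC \<alpha> \<beta> cmp ci TE p act) (fund_ent_G G TG TX TE p act))
           (fund_ent_R G TG TC \<alpha> \<beta> cmp ci TE p act)
           (\<lambda>(w, chi). gauge_action TE w chi)"
    unfolding unif_cont_base_def
  proof (intro ballI)
    fix N assume "N \<in> fund_ent_R G TG TC \<alpha> \<beta> cmp ci TE p act"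
    then obtain L V where N: "N = ent_R G TC \<alpha> \<beta> cmp ci TE p act L V"
      and L: "compactin TC L" and V: "V \<in> sym_nhds G TG"
      unfolding fund_ent_R_def by blast
    have Vo: "openin TG V" and V1: "\<one>\<^bsub>G\<^esub> \<in> V" using V by (auto simp: sym_nhds_def)
    obtain W where W: "W \<in> sym_nhds G TG" and trip: "\<forall>a\<in>W. \<forall>b\<in>W. \<forall>d\<in>W. a \<otimes>\<^bsub>G\<^esub> b \<otimes>\<^bsub>G\<^esub> d \<in> V"
      using tg_triple[OF tg Vo V1] by blast
    have sym: "\<forall>g\<in>W. inv\<^bsub>G\<^esub> g \<in> W" using W by (simp add: sym_nhds_def)
    define K where "K = \<alpha> ` L \<union> \<beta> ` L"
    have K: "compactin TX K" unfolding K_def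
      by (intro compactin_Un image_compactin[OF L ca] image_compactin[OF L cb])
    have LC: "L \<subseteq> topspace TC" using L compactin_subset_topspace by blast
    define M where "M = {((w, chi), (w', chi')). (w, w') \<in> ent_R G TC \<alpha> \<beta> cmp ci TE p act L W \<and>
                           (chi, chi') \<in> ent_G G TE p act K W}"
    have "M \<in> prod_ent_base (fund_ent_R G TG TC \<alpha> \<beta> cmp ci TE p act) (fund_ent_G G TG TX TE p act)"
      unfolding prod_ent_base_def fund_ent_R_def fund_ent_G_def M_def using L K W by blast
    moreover have "\<forall>(x, y)\<in>M. ((\<lambda>(w, chi). gauge_action TE w chi) x, (\<lambda>(w, chi). gauge_action TE w chi) y) \<in> N"
    proof (clarify)
      fix w chi w' chi'
      assume "((w, chi), (w', chi')) \<in> M"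
      then have hw: "(w, w') \<in> ent_R G TC \<alpha> \<beta> cmp ci TE p act L W"
        and hc: "(chi, chi') \<in> ent_G G TE p act K W" unfolding M_def by auto
      have w: "w \<in> ?R" and w': "w' \<in> ?R"
        and ha: "\<forall>c\<in>L. \<forall>z\<in>topspace TE. \<alpha> c = p z \<longrightarrow> bundle_gamma G act (w c z) (w' c z) \<in> W"
        using hw by (auto simp: ent_R_def)
      have chi: "chi \<in> ?GG" and chi': "chi' \<in> ?GG"
        and hb: "\<forall>z\<in>topspace TE. p z \<in> K \<longrightarrow> bundle_gamma G act (chi z) (chi' z) \<in> W"
        using hc by (auto simp: ent_G_def)
      show "(gauge_action TE w chi, gauge_action TE w' chi') \<in> N"
        unfolding N ent_R_def
      proof (intro CollectI case_prodI conjI ballI impI)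
        show "gauge_action TE w chi \<in> ?R" using P1 w chi by blast
        show "gauge_action TE w' chi' \<in> ?R" using P1 w' chi' by blast
        fix c z assume cL: "c \<in> L" and z: "z \<in> topspace TE" and e: "\<alpha> c = p z"
        show "bundle_gamma G act (gauge_action TE w chi c z) (gauge_action TE w' chi' c z) \<in> V"
        proof (rule core[OF pb w w' chi chi' _ z e _ _ trip sym])
          show "c \<in> topspace TC" using cL LC by blast
          show "\<forall>t\<in>topspace TE. \<alpha> c = p t \<longrightarrow> bundle_gamma G act (w c t) (w' c t) \<in> W"
            using ha cL by blast
          show "\<forall>t\<in>topspace TE. p t = \<alpha> c \<or> p t = \<beta> c \<longrightarrow> bundle_gamma G act (chi t) (chi' t) \<in> W"
            using hb cL unfolding K_def by auto
        qed
      qed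
    qed
    ultimately show "\<exists>M\<in>prod_ent_base (fund_ent_R G TG TC \<alpha> \<beta> cmp ci TE p act) (fund_ent_G G TG TX TE p act).
            \<forall>(x, y)\<in>M. ((\<lambda>(w, chi). gauge_action TE w chi) x, (\<lambda>(w, chi). gauge_action TE w chi) y) \<in> N"
      by blast
  qed
  show ?thesis using P1 P2 by blast
qed

end
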